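(* Let $\mathcal C$ be a $\mathbb Z_2$-graded unital (filtered) $A_\infty$-category over $\Lambda$ with finitely many objects $L_1,\dots,L_k$ (e.g. a finite collection of Lagrangian immersions in a Kähler manifold), each morphism space $\mathcal C(L_i,L_j)$ free of finite rank with a chosen basis, the basis of $\mathcal C(L_i,L_i)$ containing the unit $\mathbf 1_{L_i}$. Let $\{X_e\}_{e\in E}$ be a chosen set of odd-degree basis elements, and let $Q$ be the quiver with vertices $v_1,\dots,v_k$ and one arrow $x_e$ from $v_i$ to $v_j$ for each $X_e\in\mathcal C(L_i,L_j)$. Let $\Lambda Q$ be the completed path algebra and consider $\Lambda Q\widehat\otimes_{\Lambda^\oplus}\bigoplus_{i,j}\mathcal C(L_i,L_j)$, in which $p\otimes X$ with $X\in\mathcal C(L_i,L_j)$ is nonzero only if the path $p$ starts at $v_i$, with operations $m_k(p_1X_1,\dots,p_kX_k)=p_k\cdots p_1\,m_k(X_1,\dots,X_k)$. Let $b=\sum_{e\in E}x_eX_e$ and write $$m_0^b=\sum_{n\ge0}m_n(b,\dots,b)=\sum_{i=1}^kW_i\,\mathbf 1_{L_i}+\sum_f P_f\,X_f,$$ where $X_f$ runs over the even-degree basis elements other than the units. Let $R$ be the completed two-sided ideal generated by the $P_f$, $\mathcal A=\Lambda Q/R$ and $W=\sum_iW_i\in\mathcal A$. Then $W$ is a central element of $\mathcal A$.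
   Context: Path algebra conventions: a path $a_{m-1}\cdots a_1a_0$ is written from right to left, with the head of $a_i$ equal to the tail of $a_{i+1}$; concatenation of non-composable paths is $0$; each vertex $v_i$ gives a trivial path (idempotent) $\pi_i$, and $\Lambda^\oplus=\Lambda\pi_1\oplus\dots\oplus\Lambda\pi_k$ with $\pi_i\pi_j=\delta_{ij}\pi_i$; $\Lambda Q$ is completed with respect to the energy filtration of coefficients. The $A_\infty$-operations $m_n$ on composable morphisms have degree one in the shifted grading $|v|'=|v|-1$ and satisfy the $A_\infty$-equations with sign $(-1)^{\sum_{j<i}|v_j|'}$. Unitality: $m_2(\mathbf 1_{L_i},v)=v$, $(-1)^{|w|}m_2(w,\mathbf 1_{L_i})=w$ whenever defined, and $m_n(\dots,\mathbf 1_{L_i},\dots)=0$ for $n\ne2$. The variables $x_e$ have degree $0$. *)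

theory Defs
  imports Complex_Main
begin

(* Objects L_i are the elements of a finite type 'o; the union of the chosen bases of all
   morphism spaces C(L_i,L_j) is a finite type 'b, a basis element X lying in
   C(L_(src X), L_(tgt X)).  The Z2-degree of X is given by deg_odd X (True = odd degree).
   An A-infinity operation m_n(X_1,...,X_n) on composable basis elements
   X_1 in C(L_(i0),L_(i1)), X_2 in C(L_(i1),L_(i2)), ... is encoded by its coefficients:
   mop i0 [X_1,...,X_n] Z = coefficient of the basis element Z in m_n(X_1,...,X_n)
   (the object i0 is needed for m_0). *)

fun chain :: "('b \<Rightarrow> 'o) \<Rightarrow> ('b \<Rightarrow> 'o) \<Rightarrow> 'o \<Rightarrow> 'b list \<Rightarrow> bool" where
  "chain s t i [] = True"
| "chain s t i (x # xs) = (s x = i \<and> chain s t (t x) xs)"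

fun endpt :: "('b \<Rightarrow> 'o) \<Rightarrow> 'o \<Rightarrow> 'b list \<Rightarrow> 'o" where
  "endpt t i [] = i"
| "endpt t i (x # xs) = endpt t (t x) xs"

(* number of inputs of even degree; |X|' = |X| - 1, so (-1)^(sum of shifted degrees)
   equals (-1)^(number of even-degree entries) *)
definition n_even :: "('b \<Rightarrow> bool) \<Rightarrow> 'b list \<Rightarrow> nat" where
  "n_even deg_odd xs = length (filter (\<lambda>x. \<not> deg_odd x) xs)"

definition energy_val :: "('r::comm_ring_1 \<Rightarrow> real) \<Rightarrow> bool" where
  "energy_val val \<longleftrightarrow>
     val 1 = 0 \<and>
     (\<forall>a. val (- a) = val a) \<and>
     (\<forall>a b. a \<noteq> 0 \<longrightarrow> b \<noteq> 0 \<longrightarrow> a + b \<noteq> 0 \<longrightarrow> val (a + b) \<ge> min (val a) (val b)) \<and>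
     (\<forall>a b. a * b \<noteq> 0 \<longrightarrow> val (a * b) \<ge> val a + val b)"

definition unital_Ainf ::
  "('b \<Rightarrow> 'o) \<Rightarrow> ('b \<Rightarrow> 'o) \<Rightarrow> ('b \<Rightarrow> bool) \<Rightarrow> ('o \<Rightarrow> 'b)
   \<Rightarrow> ('o \<Rightarrow> 'b list \<Rightarrow> 'b \<Rightarrow> 'r::comm_ring_1) \<Rightarrow> bool" where
  "unital_Ainf s t deg_odd unit mop \<longleftrightarrow>
     \<comment> \<open>m_n is defined on composable inputs, with output in C(L_i0, L_in)\<close>
     (\<forall>i xs z. mop i xs z \<noteq> 0 \<longrightarrow>
          chain s t i xs \<and> s z = i \<and> t z = endpt t i xs) \<and>
     \<comment> \<open>m_n has degree one in the shifted grading\<close>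
     (\<forall>i xs z. mop i xs z \<noteq> 0 \<longrightarrow> (deg_odd z \<longleftrightarrow> odd (n_even deg_odd xs))) \<and>
     \<comment> \<open>A-infinity equations\<close>
     (\<forall>i xs z. chain s t i xs \<longrightarrow>
        (\<Sum>k1\<le>length xs. \<Sum>k2\<le>length xs - k1. \<Sum>y\<in>UNIV.
            (- 1) ^ n_even deg_odd (take k1 xs)
            * mop (endpt t i (take k1 xs)) (take k2 (drop k1 xs)) y
            * mop i (take k1 xs @ [y] @ drop (k1 + k2) xs) z) = 0) \<and>
     \<comment> \<open>units: 1_(L_i) is an even basis element of C(L_i,L_i)\<close>
     (\<forall>i. s (unit i) = i \<and> t (unit i) = i \<and> \<not> deg_odd (unit i)) \<and>
     (\<forall>x z. mop (s x) [unit (s x), x] z = (if z = x then 1 else 0)) \<and>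
     (\<forall>x z. (- 1) ^ (if deg_odd x then 1 else 0) * mop (s x) [x, unit (t x)] z
              = (if z = x then 1 else 0)) \<and>
     (\<forall>i xs z. length xs \<noteq> 2 \<longrightarrow> (\<exists>j. unit j \<in> set xs) \<longrightarrow> mop i xs z = 0)"

(* This makes m_0^b and all m(b,...,b,y,b,...,b)
   converge in the energy-completed path algebra. *)
definition energy_convergent ::
  "('b \<Rightarrow> 'o) \<Rightarrow> ('b \<Rightarrow> 'o) \<Rightarrow> 'b set \<Rightarrow> ('r::comm_ring_1 \<Rightarrow> real)
   \<Rightarrow> ('o \<Rightarrow> 'b list \<Rightarrow> 'b \<Rightarrow> 'r) \<Rightarrow> bool" where
  "energy_convergent s t E val mop \<longleftrightarrow>
     (\<forall>c. finite {(i, xs). chain s t i xs \<and> length (filter (\<lambda>x. x \<notin> E) xs) \<le> 1 \<and>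
                         (\<exists>z. mop i xs z \<noteq> 0 \<and> val (mop i xs z) < c)})"

(* Paths in the quiver Q: a path is (v_i, [e_1,...,e_n]) = x_(e_n) ... x_(e_1)
   starting at v_i; an arrow x_e goes from v_(src e) to v_(tgt e).
   Elements of the completed path algebra Lambda Q: coefficient functions on paths
   with energy going to infinity. *)
definition cpa :: "('b \<Rightarrow> 'o) \<Rightarrow> ('b \<Rightarrow> 'o) \<Rightarrow> 'b set \<Rightarrow> ('r::comm_ring_1 \<Rightarrow> real)
                    \<Rightarrow> ('o \<times> 'b list \<Rightarrow> 'r) set" where
  "cpa s t E val = {f. (\<forall>i es. f (i, es) \<noteq> 0 \<longrightarrow> chain s t i es \<and> set es \<subseteq> E) \<and>
                        (\<forall>c. finite {p. f p \<noteq> 0 \<and> val (f p) < c})}"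

(* product in the path algebra: (f g) = sum f_p g_q (p q), q traversed first *)
definition pmul :: "('b \<Rightarrow> 'o) \<Rightarrow> ('o \<times> 'b list \<Rightarrow> 'r::comm_ring_1)
                     \<Rightarrow> ('o \<times> 'b list \<Rightarrow> 'r) \<Rightarrow> ('o \<times> 'b list \<Rightarrow> 'r)" where
  "pmul t f g = (\<lambda>(i, es). \<Sum>k\<le>length es. f (endpt t i (take k es), drop k es) * g (i, take k es))"

definition alg_ideal :: "('b \<Rightarrow> 'o) \<Rightarrow> ('o \<times> 'b list \<Rightarrow> 'r::comm_ring_1) set
                         \<Rightarrow> ('o \<times> 'b list \<Rightarrow> 'r) set \<Rightarrow> ('o \<times> 'b list \<Rightarrow> 'r) set" where
  "alg_ideal t A G = {h. \<exists>n a g c. (\<forall>l<n. a l \<in> A \<and> g l \<in> G \<and> c l \<in> A) \<and>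
                        h = (\<lambda>p. \<Sum>l<(n::nat). pmul t (pmul t (a l) (g l)) (c l) p)}"

definition eclosure :: "('r::comm_ring_1 \<Rightarrow> real) \<Rightarrow> ('p \<Rightarrow> 'r) set \<Rightarrow> ('p \<Rightarrow> 'r) set" where
  "eclosure val S = {f. \<forall>c. \<exists>g\<in>S. \<forall>p. f p \<noteq> g p \<longrightarrow> val (f p - g p) \<ge> c}"

(* coefficient of the basis element Z in m_0^b = sum_n m_n(b,...,b), b = sum_e x_e X_e *)
definition m0b :: "('b \<Rightarrow> 'o) \<Rightarrow> ('b \<Rightarrow> 'o) \<Rightarrow> 'b set
                   \<Rightarrow> ('o \<Rightarrow> 'b list \<Rightarrow> 'b \<Rightarrow> 'r::comm_ring_1) \<Rightarrow> 'b \<Rightarrow> ('o \<times> 'b list \<Rightarrow> 'r)" where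
  "m0b s t E mop z = (\<lambda>(i, es). if chain s t i es \<and> set es \<subseteq> E then mop i es z else 0)"

definition Wpot :: "('b \<Rightarrow> 'o) \<Rightarrow> ('b \<Rightarrow> 'o) \<Rightarrow> 'b set \<Rightarrow> ('o::finite \<Rightarrow> 'b)
                    \<Rightarrow> ('o \<Rightarrow> 'b list \<Rightarrow> 'b \<Rightarrow> 'r::comm_ring_1) \<Rightarrow> ('o \<times> 'b list \<Rightarrow> 'r)" where
  "Wpot s t E unit mop = (\<lambda>p. \<Sum>j\<in>UNIV. m0b s t E mop (unit j) p)"

definition Rideal :: "('b \<Rightarrow> 'o) \<Rightarrow> ('b \<Rightarrow> 'o) \<Rightarrow> ('b \<Rightarrow> bool) \<Rightarrow> ('o \<Rightarrow> 'b) \<Rightarrow> 'b set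
                     \<Rightarrow> ('r::comm_ring_1 \<Rightarrow> real) \<Rightarrow> ('o \<Rightarrow> 'b list \<Rightarrow> 'b \<Rightarrow> 'r)
                     \<Rightarrow> ('o \<times> 'b list \<Rightarrow> 'r) set" where
  "Rideal s t deg_odd unit E val mop =
     cpa s t E val \<inter>
     eclosure val (alg_ideal t (cpa s t E val)
        {m0b s t E mop f | f. \<not> deg_odd f \<and> f \<notin> range unit})"

end

theory Submission
  imports Defs
begin

section \<open>Splits of lists\<close>

definition S2 :: "'a list \<Rightarrow> ('a list \<times> 'a list) set" where
  "S2 L = {(a, b). a @ b = L}"
definition S3 :: "'a list \<Rightarrow> ('a list \<times> 'a list \<times> 'a list) set" where
  "S3 L = {(a, b, c). a @ b @ c = L}"
definition S5 :: "'a list \<Rightarrow> ('a list \<times> 'a list \<times> 'a list \<times> 'a list \<times> 'a list) set" where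
  "S5 L = {(a, b, c, d, e). a @ b @ c @ d @ e = L}"
definition infx :: "'a list \<Rightarrow> 'a list set" where
  "infx L = {x. \<exists>a b. a @ x @ b = L}"

lemma finite_infx: "finite (infx L)"
proof -
  have "infx L \<subseteq> {xs. set xs \<subseteq> set L \<and> length xs \<le> length L}"
    unfolding infx_def by auto
  moreover have "finite {xs. set xs \<subseteq> set L \<and> length xs \<le> length L}"
    by (rule finite_lists_length_le) simp
  ultimately show ?thesis by (rule finite_subset)
qed

lemma finite_S2: "finite (S2 L)"
proof -
  have "S2 L \<subseteq> infx L \<times> infx L" unfolding S2_def infx_def by force
  thus ?thesis using finite_infx by (meson finite_SigmaI finite_subset)
qed

lemma finite_S3: "finite (S3 L)"
proof -
  have "S3 L \<subseteq> infx L \<times> infx L \<times> infx L"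
  proof
    fix x assume "x \<in> S3 L"
    then obtain a b c where x: "x = (a,b,c)" and h: "a @ b @ c = L" by (auto simp: S3_def)
    have "[] @ a @ (b @ c) = L" "a @ b @ c = L" "(a @ b) @ c @ [] = L" using h by auto
    thus "x \<in> infx L \<times> infx L \<times> infx L" unfolding infx_def x by blast
  qed
  thus ?thesis using finite_infx by (meson finite_SigmaI finite_subset)
qed

lemma finite_S5: "finite (S5 L)"
proof -
  have "S5 L \<subseteq> infx L \<times> infx L \<times> infx L \<times> infx L \<times> infx L"
  proof
    fix x assume "x \<in> S5 L"
    then obtain a b c d e where x: "x = (a,b,c,d,e)" and h: "a @ b @ c @ d @ e = L" by (auto simp: S5_def)
    have "[] @ a @ (b @ c @ d @ e) = L" "a @ b @ (c @ d @ e) = L" "(a @ b) @ c @ (d @ e) = L"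
      "(a @ b @ c) @ d @ e = L" "(a @ b @ c @ d) @ e @ [] = L" using h by auto
    thus "x \<in> infx L \<times> infx L \<times> infx L \<times> infx L \<times> infx L"
      unfolding infx_def x by blast
  qed
  thus ?thesis using finite_infx by (meson finite_SigmaI finite_subset)
qed

lemma sum_S2: "(\<Sum>k\<le>length L. F (take k L) (drop k L)) = (\<Sum>(a,b)\<in>S2 L. F a b)"
  by (rule sum.reindex_bij_witness[of _ "\<lambda>(a,b). length a" "\<lambda>k. (take k L, drop k L)"])
     (auto simp: S2_def)

lemma S2_S3_left:
  "(\<Sum>(a,r)\<in>S2 L. \<Sum>(b,c)\<in>S2 r. F a b c) = (\<Sum>(a,b,c)\<in>S3 L. F a b c)"
proof -
  have "(\<Sum>(a,r)\<in>S2 L. \<Sum>(b,c)\<in>S2 r. F a b c)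
      = (\<Sum>x\<in>S2 L. \<Sum>y\<in>S2 (snd x). F (fst x) (fst y) (snd y))"
    by (simp add: case_prod_beta)
  also have "\<dots> = (\<Sum>(x,y)\<in>Sigma (S2 L) (\<lambda>x. S2 (snd x)). F (fst x) (fst y) (snd y))"
    by (rule sum.Sigma) (auto simp: finite_S2)
  also have "\<dots> = (\<Sum>(a,b,c)\<in>S3 L. F a b c)"
    by (rule sum.reindex_bij_witness[of _ "\<lambda>(a,b,c). ((a, b@c), (b,c))" "\<lambda>((a,r),(b,c)). (a,b,c)"])
       (auto simp: S2_def S3_def)
  finally show ?thesis .
qed

lemma S2_S3_right:
  "(\<Sum>(x,c)\<in>S2 L. \<Sum>(a,b)\<in>S2 x. F a b c) = (\<Sum>(a,b,c)\<in>S3 L. F a b c)"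
proof -
  have "(\<Sum>(x,c)\<in>S2 L. \<Sum>(a,b)\<in>S2 x. F a b c)
      = (\<Sum>x\<in>S2 L. \<Sum>y\<in>S2 (fst x). F (fst y) (snd y) (snd x))"
    by (simp add: case_prod_beta)
  also have "\<dots> = (\<Sum>(x,y)\<in>Sigma (S2 L) (\<lambda>x. S2 (fst x)). F (fst y) (snd y) (snd x))"
    by (rule sum.Sigma) (auto simp: finite_S2)
  also have "\<dots> = (\<Sum>(a,b,c)\<in>S3 L. F a b c)"
    by (rule sum.reindex_bij_witness[of _ "\<lambda>(a,b,c). ((a@b, c), (a,b))" "\<lambda>((x,c),(a,b)). (a,b,c)"])
       (auto simp: S2_def S3_def)
  finally show ?thesis .
qed

lemma five_left:
  "(\<Sum>(a,r,c)\<in>S3 L. \<Sum>(b1,b2,b3)\<in>S3 r. F a b1 b2 b3 c) = (\<Sum>(a,b1,b2,b3,c)\<in>S5 L. F a b1 b2 b3 c)"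
proof -
  have "(\<Sum>(a,r,c)\<in>S3 L. \<Sum>(b1,b2,b3)\<in>S3 r. F a b1 b2 b3 c)
      = (\<Sum>x\<in>S3 L. \<Sum>y\<in>S3 (fst (snd x)). F (fst x) (fst y) (fst (snd y)) (snd (snd y)) (snd (snd x)))"
    by (simp add: case_prod_beta)
  also have "\<dots> = (\<Sum>(x,y)\<in>Sigma (S3 L) (\<lambda>x. S3 (fst (snd x))).
                     F (fst x) (fst y) (fst (snd y)) (snd (snd y)) (snd (snd x)))"
    by (rule sum.Sigma) (auto simp: finite_S3)
  also have "\<dots> = (\<Sum>(a,b1,b2,b3,c)\<in>S5 L. F a b1 b2 b3 c)"
    by (rule sum.reindex_bij_witness[of _ "\<lambda>(a,b1,b2,b3,c). ((a, b1@b2@b3, c), (b1,b2,b3))"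
                                         "\<lambda>((a,r,c),(b1,b2,b3)). (a,b1,b2,b3,c)"])
       (auto simp: S3_def S5_def)
  finally show ?thesis .
qed

lemma five_right:
  "(\<Sum>(x1,x2,x3)\<in>S3 L. \<Sum>(a,b1)\<in>S2 x1. \<Sum>(b3,c)\<in>S2 x3. F a b1 x2 b3 c)
   = (\<Sum>(a,b1,b2,b3,c)\<in>S5 L. F a b1 b2 b3 c)"
proof -
  have "(\<Sum>(x1,x2,x3)\<in>S3 L. \<Sum>(a,b1)\<in>S2 x1. \<Sum>(b3,c)\<in>S2 x3. F a b1 x2 b3 c)
      = (\<Sum>x\<in>S3 L. \<Sum>y\<in>S2 (fst x) \<times> S2 (snd (snd x)).
            F (fst (fst y)) (snd (fst y)) (fst (snd x)) (fst (snd y)) (snd (snd y)))"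
    by (simp add: case_prod_beta sum.cartesian_product)
  also have "\<dots> = (\<Sum>(x,y)\<in>Sigma (S3 L) (\<lambda>x. S2 (fst x) \<times> S2 (snd (snd x))).
            F (fst (fst y)) (snd (fst y)) (fst (snd x)) (fst (snd y)) (snd (snd y)))"
    by (rule sum.Sigma) (auto simp: finite_S3 finite_S2)
  also have "\<dots> = (\<Sum>(a,b1,b2,b3,c)\<in>S5 L. F a b1 b2 b3 c)"
    by (rule sum.reindex_bij_witness[of _ "\<lambda>(a,b1,b2,b3,c). ((a@b1, b2, b3@c), ((a,b1),(b3,c)))"
                                         "\<lambda>((x1,x2,x3),((a,b1),(b3,c))). (a,b1,x2,b3,c)"])
       (auto simp: S3_def S5_def S2_def)
  finally show ?thesis .
qed

section \<open>Chains\<close>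

lemma chain_append: "chain s t i (xs @ ys) \<longleftrightarrow> chain s t i xs \<and> chain s t (endpt t i xs) ys"
  by (induction xs arbitrary: i) auto

lemma endpt_append: "endpt t i (xs @ ys) = endpt t (endpt t i xs) ys"
  by (induction xs arbitrary: i) auto

lemma endpt_snoc: "endpt t i (xs @ [x]) = t x"
  by (simp add: endpt_append)

lemma chain_snoc_src: "chain s t i (xs @ [x]) \<Longrightarrow> s x = endpt t i xs"
  by (simp add: chain_append)

locale thm66 =
  fixes s t :: "'b::finite \<Rightarrow> 'o::finite" and deg :: "'b \<Rightarrow> bool" and unit :: "'o \<Rightarrow> 'b"
    and mop :: "'o \<Rightarrow> 'b list \<Rightarrow> 'b \<Rightarrow> 'r::comm_ring_1" and val :: "'r \<Rightarrow> real" and E :: "'b set"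
  assumes ev: "energy_val val" and ua: "unital_Ainf s t deg unit mop"
    and ec: "energy_convergent s t E val mop" and oddE: "\<forall>e\<in>E. deg e"
begin

definition V :: "'o \<Rightarrow> 'b list \<Rightarrow> bool" where
  "V i es \<longleftrightarrow> chain s t i es \<and> set es \<subseteq> E"

abbreviation W where "W \<equiv> Wpot s t E unit mop"
abbreviation P where "P y \<equiv> m0b s t E mop y"

lemma mop_nz: "mop i xs z \<noteq> 0 \<Longrightarrow> chain s t i xs \<and> s z = i \<and> t z = endpt t i xs"
  using ua unfolding unital_Ainf_def by blast

lemma mop_deg: "mop i xs z \<noteq> 0 \<Longrightarrow> deg z \<longleftrightarrow> odd (n_even deg xs)"
  using ua unfolding unital_Ainf_def by blast

lemma neven_E: "set xs \<subseteq> E \<Longrightarrow> n_even deg xs = 0"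
  using oddE unfolding n_even_def by (auto simp: filter_empty_conv)

lemma unit_s[simp]: "s (unit i) = i" and unit_t[simp]: "t (unit i) = i" and unit_even: "\<not> deg (unit i)"
  using ua unfolding unital_Ainf_def by blast+

lemma unit_inj: "unit i = unit j \<longleftrightarrow> i = j"
  by (metis unit_s)

lemma unit_left: "mop (s x) [unit (s x), x] z = (if z = x then 1 else 0)"
  using ua unfolding unital_Ainf_def by blast

lemma unit_right: "(- 1) ^ (if deg x then 1 else 0) * mop (s x) [x, unit (t x)] z = (if z = x then 1 else 0)"
  using ua unfolding unital_Ainf_def by blast

lemma unit_zero: "length xs \<noteq> 2 \<Longrightarrow> unit j \<in> set xs \<Longrightarrow> mop i xs z = 0"
  using ua unfolding unital_Ainf_def by blast

lemma Ainf_raw: "chain s t i xs \<Longrightarrow>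
        (\<Sum>k1\<le>length xs. \<Sum>k2\<le>length xs - k1. \<Sum>y\<in>UNIV.
            (- 1) ^ n_even deg (take k1 xs)
            * mop (endpt t i (take k1 xs)) (take k2 (drop k1 xs)) y
            * mop i (take k1 xs @ [y] @ drop (k1 + k2) xs) z) = 0"
  using ua unfolding unital_Ainf_def by blast

lemma W_eq: "W (j, w) = (if V j w then mop j w (unit j) else 0)"
proof (cases "V j w")
  case True
  have "(\<Sum>l\<in>UNIV. mop j w (unit l)) = (\<Sum>l\<in>UNIV. if l = j then mop j w (unit l) else 0)"
    by (rule sum.cong) (auto, metis mop_nz unit_s)
  also have "\<dots> = mop j w (unit j)" by simp
  finally show ?thesis using True by (simp add: Wpot_def m0b_def V_def)
next
  case False
  have c: "\<not> (chain s t j w \<and> set w \<subseteq> E)" using False V_def by blast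
  have "W (j,w) = 0" unfolding Wpot_def m0b_def prod.case if_not_P[OF c] by simp
  then show ?thesis using False by simp
qed

lemma W_loop: "W (j, w) \<noteq> 0 \<Longrightarrow> endpt t j w = j"
  by (auto simp: W_eq split: if_splits dest: mop_nz)

lemma P_eq: "P y (j, w) = (if V j w then mop j w y else 0)"
  by (simp add: m0b_def V_def)

lemma pmul_S2: "pmul t f g (i, es) = (\<Sum>(a,b)\<in>S2 es. f (endpt t i a, b) * g (i, a))"
  unfolding pmul_def using sum_S2[of "\<lambda>a b. f (endpt t i a, b) * g (i, a)" es] by simp

lemma Ainf_S3: assumes "V j u"
  shows "(\<Sum>(a,b,c)\<in>S3 u. \<Sum>y\<in>UNIV. mop (endpt t j a) b y * mop j (a @ [y] @ c) e) = 0"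
proof -
  have ch: "chain s t j u" and E: "set u \<subseteq> E" using assms by (auto simp: V_def)
  have ne: "\<And>k. n_even deg (take k u) = 0"
    by (rule neven_E) (meson E order_trans set_take_subset)
  have "(\<Sum>k1\<le>length u. \<Sum>k2\<le>length u - k1. \<Sum>y\<in>UNIV.
            (- 1) ^ n_even deg (take k1 u)
            * mop (endpt t j (take k1 u)) (take k2 (drop k1 u)) y
            * mop j (take k1 u @ [y] @ drop (k1 + k2) u) e)
      = (\<Sum>k1\<le>length u. \<Sum>k2\<le>length (drop k1 u). \<Sum>y\<in>UNIV.
            mop (endpt t j (take k1 u)) (take k2 (drop k1 u)) y
            * mop j (take k1 u @ [y] @ drop k2 (drop k1 u)) e)"
    by (simp add: ne add.commute)
  also have "\<dots> = (\<Sum>k1\<le>length u. \<Sum>(b,c)\<in>S2 (drop k1 u). \<Sum>y\<in>UNIV.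
            mop (endpt t j (take k1 u)) b y * mop j (take k1 u @ [y] @ c) e)"
    by (rule sum.cong[OF refl]) (rule sum_S2[where F="\<lambda>b c. \<Sum>y\<in>UNIV.
            mop (endpt t j (take _ u)) b y * mop j (take _ u @ [y] @ c) e"])
  also have "\<dots> = (\<Sum>(a,r)\<in>S2 u. \<Sum>(b,c)\<in>S2 r. \<Sum>y\<in>UNIV.
            mop (endpt t j a) b y * mop j (a @ [y] @ c) e)"
    by (rule sum_S2[where F="\<lambda>a r. \<Sum>(b,c)\<in>S2 r. \<Sum>y\<in>UNIV.
            mop (endpt t j a) b y * mop j (a @ [y] @ c) e"])
  also have "\<dots> = (\<Sum>(a,b,c)\<in>S3 u. \<Sum>y\<in>UNIV. mop (endpt t j a) b y * mop j (a @ [y] @ c) e)"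
    by (rule S2_S3_left)
  finally show ?thesis using Ainf_raw[OF ch, of e] by simp
qed

lemma sum_single: "(\<And>l. l \<noteq> l0 \<Longrightarrow> G l = 0) \<Longrightarrow> (\<Sum>l\<in>(UNIV::'c::finite set). G l) = G l0"
proof -
  assume h: "\<And>l. l \<noteq> l0 \<Longrightarrow> G l = 0"
  have "(\<Sum>l\<in>(UNIV::'c set). G l) = (\<Sum>l\<in>UNIV. if l = l0 then G l else 0)"
    by (rule sum.cong) (auto simp: h)
  thus ?thesis by simp
qed

definition Y :: "'b set" where "Y = {y. \<not> deg y \<and> y \<notin> range unit}"

definition N :: "'o \<Rightarrow> 'b list \<Rightarrow> 'b \<Rightarrow> 'r" where
  "N j u e = (\<Sum>(a,b,c)\<in>S3 u. \<Sum>y\<in>Y. mop (endpt t j a) b y * mop j (a @ [y] @ c) e)"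

definition U :: "'o \<Rightarrow> 'b list \<Rightarrow> 'b \<Rightarrow> 'r" where
  "U j u e = (if u = [] then 0 else
     (if e = last u then W (j, butlast u) else 0) - (if e = hd u then W (t (hd u), tl u) else 0))"

lemma V_append: "V i (xs @ ys) \<longleftrightarrow> V i xs \<and> V (endpt t i xs) ys"
  by (auto simp: V_def chain_append)

lemma unit_part: assumes "V j u"
  shows "(\<Sum>(a,b,c)\<in>S3 u. \<Sum>l\<in>UNIV. mop (endpt t j a) b (unit l) * mop j (a @ [unit l] @ c) e)
         = U j u e"
proof -
  define F where "F = (\<lambda>(a,b,c). \<Sum>l\<in>UNIV. mop (endpt t j a) b (unit l) * mop j (a @ [unit l] @ c) e)"
  have F0: "F (a,b,c) = 0" if "length a + length c \<noteq> 1" for a b c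
  proof -
    have "mop j (a @ [unit l] @ c) e = 0" for l by (rule unit_zero[where j=l]) (use that in auto)
    thus ?thesis unfolding F_def by simp
  qed
  show ?thesis
  proof (cases "u = []")
    case True
    have "S3 u = {([],[],[])}" using True by (auto simp: S3_def)
    thus ?thesis using True F0 unfolding F_def[symmetric] by (simp add: U_def)
  next
    case False
    define x1 where "x1 = hd u"
    define xl where "xl = last u"
    have u1: "u = x1 # tl u" using False by (simp add: x1_def)
    have u2: "u = butlast u @ [xl]" using False by (simp add: xl_def)
    let ?Z = "{([], butlast u, [xl]), ([x1], tl u, [])}"
    have Zsub: "?Z \<subseteq> S3 u" unfolding S3_def using u1 u2 by auto
    have "(\<Sum>z\<in>S3 u. F z) = (\<Sum>z\<in>?Z. F z)"
    proof (rule sum.mono_neutral_right[OF finite_S3 Zsub], rule ballI)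
      fix z assume z: "z \<in> S3 u - ?Z"
      then obtain a b c where zz: "z = (a,b,c)" and abc: "a @ b @ c = u" by (auto simp: S3_def)
      show "F z = 0"
      proof (cases "length a + length c = 1")
        case True
        then consider "a = [] \<and> length c = 1" | "length a = 1 \<and> c = []"
          using add_is_1[of "length a" "length c"] by auto
        thus ?thesis
        proof cases
          case 1
          then obtain x where "c = [x]" "a = []" by (auto simp: length_Suc_conv)
          hence "b = butlast u" "xl = x" using abc u2 by (auto simp: xl_def)
          thus ?thesis using z zz \<open>c = [x]\<close> \<open>a = []\<close> by auto
        next
          case 2
          then obtain x where "a = [x]" "c = []" by (auto simp: length_Suc_conv)
          hence "b = tl u" "x1 = x" using abc by (auto simp: x1_def)
          thus ?thesis using z zz \<open>a = [x]\<close> \<open>c = []\<close> by auto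
        qed
      qed (simp add: zz F0)
    qed
    also have "\<dots> = F ([], butlast u, [xl]) + F ([x1], tl u, [])" by simp
    also have "F ([], butlast u, [xl]) = (if e = xl then W (j, butlast u) else 0)"
    proof -
      have "F ([], butlast u, [xl]) = mop j (butlast u) (unit j) * mop j [unit j, xl] e"
        unfolding F_def by simp (rule sum_single, metis mop_nz mult_zero_left unit_s)
      also have "\<dots> = (if e = xl then W (j, butlast u) else 0)"
      proof (cases "mop j (butlast u) (unit j) = 0")
        case True
        thus ?thesis using assms by (subst (asm) u2) (simp add: W_eq V_append)
      next
        case nz: False
        have "s xl = endpt t j (butlast u)" using assms u2 chain_snoc_src by (metis V_def)
        also have "\<dots> = j" using mop_nz[OF nz] by simp
        finally have "mop j [unit j, xl] e = (if e = xl then 1 else 0)" using unit_left[of xl e] by simp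
        thus ?thesis using assms by (subst (asm) u2) (simp add: W_eq V_append)
      qed
      finally show ?thesis .
    qed
    also have "F ([x1], tl u, []) = - (if e = x1 then W (t x1, tl u) else 0)"
    proof -
      have "F ([x1], tl u, []) = mop (t x1) (tl u) (unit (t x1)) * mop j [x1, unit (t x1)] e"
        unfolding F_def by simp (rule sum_single, metis mop_nz mult_zero_left unit_s)
      also have "j = s x1" using assms by (subst (asm) u1) (simp add: V_def)
      also have "deg x1" using assms oddE by (subst (asm) u1) (simp add: V_def)
      hence "mop (s x1) [x1, unit (t x1)] e = - (if e = x1 then 1 else 0)"
        using unit_right[of x1 e] by (simp add: minus_equation_iff)
      also have "mop (t x1) (tl u) (unit (t x1)) = W (t x1, tl u)"
        using assms by (subst (asm) u1) (simp add: W_eq V_def)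
      finally show ?thesis by simp
    qed
    finally show ?thesis unfolding F_def using False by (simp add: U_def x1_def xl_def)
  qed
qed

lemma N_eq: assumes "V j u" shows "N j u e = - U j u e"
proof -
  have E: "set u \<subseteq> E" using assms by (simp add: V_def)
  define X where "X = (\<lambda>a b c y. mop (endpt t j a) b y * mop j (a @ [y] @ c) e)"
  have split: "(\<Sum>y\<in>UNIV. X a b c y) = (\<Sum>l\<in>UNIV. X a b c (unit l)) + (\<Sum>y\<in>Y. X a b c y)"
    if abc: "(a,b,c) \<in> S3 u" for a b c
  proof -
    have bE: "set b \<subseteq> E" using abc E by (auto simp: S3_def)
    have "(\<Sum>y\<in>UNIV. X a b c y) = (\<Sum>y\<in>range unit. X a b c y) + (\<Sum>y\<in>UNIV - range unit. X a b c y)"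
      by (metis Diff_partition finite sum.subset_diff top_greatest add.commute)
    also have "(\<Sum>y\<in>range unit. X a b c y) = (\<Sum>l\<in>UNIV. X a b c (unit l))"
      by (rule sum.reindex[unfolded comp_def]) (simp add: inj_def unit_inj)
    also have "(\<Sum>y\<in>UNIV - range unit. X a b c y) = (\<Sum>y\<in>Y. X a b c y)"
    proof (rule sum.mono_neutral_right)
      show "\<forall>y\<in>UNIV - range unit - Y. X a b c y = 0"
      proof
        fix y assume "y \<in> UNIV - range unit - Y"
        hence "deg y" by (auto simp: Y_def)
        thus "X a b c y = 0" unfolding X_def using mop_deg[of "endpt t j a" b y] neven_E[OF bE]
          by (cases "mop (endpt t j a) b y = 0") auto
      qed
    qed (auto simp: Y_def)
    finally show ?thesis .
  qed
  have "0 = (\<Sum>(a,b,c)\<in>S3 u. \<Sum>y\<in>UNIV. X a b c y)" using Ainf_S3[OF assms, of e] by (simp add: X_def)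
  also have "\<dots> = (\<Sum>(a,b,c)\<in>S3 u. (\<Sum>l\<in>UNIV. X a b c (unit l)) + (\<Sum>y\<in>Y. X a b c y))"
    by (rule sum.cong) (auto simp: split)
  also have "\<dots> = U j u e + N j u e"
    by (simp add: sum.distrib case_prod_beta unit_part[OF assms, symmetric] N_def X_def)
  finally show ?thesis by (simp add: eq_neg_iff_add_eq_0 add.commute)
qed

lemma sum_split_filter: "finite A \<Longrightarrow> sum f A = sum f {x\<in>A. Q x} + sum f {x\<in>A. \<not> Q x}"
  by (subst sum.union_disjoint[symmetric]) (auto intro: sum.cong)

lemma comm_formula: assumes "V i es"
  shows "pmul t W g (i, es) - pmul t g W (i, es)
       = (\<Sum>(al,be,ga)\<in>S3 es. \<Sum>e\<in>UNIV. g (i, al @ [e] @ ga) * N (endpt t i al) be e)"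
proof -
  define F where "F = (\<lambda>(al,be,ga). g (i, al @ ga) * W (endpt t i al, be))"
  define A where "A = (\<lambda>(al::'b list,be::'b list,ga::'b list). if be = [] then 0 else
                         g (i, al @ [hd be] @ ga) * W (t (hd be), tl be))"
  define B where "B = (\<lambda>(al::'b list,be::'b list,ga::'b list). if be = [] then 0 else
                         g (i, al @ [last be] @ ga) * W (endpt t i al, butlast be))"
  have step1: "(\<Sum>e\<in>UNIV. g (i, al @ [e] @ ga) * N (endpt t i al) be e) = A (al,be,ga) - B (al,be,ga)"
    if "(al,be,ga) \<in> S3 es" for al be ga
  proof -
    have "V (endpt t i al) be" using that assms by (auto simp: S3_def V_append)
    hence "(\<Sum>e\<in>UNIV. g (i, al @ [e] @ ga) * N (endpt t i al) be e)
        = (\<Sum>e\<in>UNIV. g (i, al @ [e] @ ga) * (- U (endpt t i al) be e))"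
      by (simp add: N_eq)
    also have "\<dots> = A (al,be,ga) - B (al,be,ga)"
      by (simp add: U_def A_def B_def right_diff_distrib sum_subtractf if_distrib[of "\<lambda>x. _ * x"]
           cong: if_cong)
    finally show ?thesis .
  qed
  have "(\<Sum>(al,be,ga)\<in>S3 es. \<Sum>e\<in>UNIV. g (i, al @ [e] @ ga) * N (endpt t i al) be e)
      = (\<Sum>z\<in>S3 es. A z - B z)"
  proof (rule sum.cong[OF refl])
    fix z assume z: "z \<in> S3 es"
    obtain al be ga where zz: "z = (al,be,ga)" by (cases z)
    show "(case z of (al,be,ga) \<Rightarrow> \<Sum>e\<in>UNIV. g (i, al @ [e] @ ga) * N (endpt t i al) be e) = A z - B z"
      unfolding zz using step1[of al be ga] z zz by simp
  qed
  also have "\<dots> = sum A (S3 es) - sum B (S3 es)" by (rule sum_subtractf)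
  also have "sum A (S3 es) = sum F {z\<in>S3 es. fst z \<noteq> []}"
  proof -
    have "sum A (S3 es) = sum A {z\<in>S3 es. fst (snd z) \<noteq> []}"
      by (rule sum.mono_neutral_right) (auto simp: finite_S3 A_def)
    also have "\<dots> = sum F {z\<in>S3 es. fst z \<noteq> []}"
      by (rule sum.reindex_bij_witness[of _ "\<lambda>(a,b,c). (butlast a, last a # b, c)"
                                           "\<lambda>(a,b,c). (a @ [hd b], tl b, c)"])
         (auto simp: S3_def F_def A_def endpt_snoc)
    finally show ?thesis .
  qed
  also have "sum B (S3 es) = sum F {z\<in>S3 es. snd (snd z) \<noteq> []}"
  proof -
    have "sum B (S3 es) = sum B {z\<in>S3 es. fst (snd z) \<noteq> []}"
      by (rule sum.mono_neutral_right) (auto simp: finite_S3 B_def)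
    also have "\<dots> = sum F {z\<in>S3 es. snd (snd z) \<noteq> []}"
      by (rule sum.reindex_bij_witness[of _ "\<lambda>(a,b,c). (a, b @ [hd c], tl c)"
                                           "\<lambda>(a,b,c). (a, butlast b, last b # c)"])
         (auto simp: S3_def F_def B_def)
    finally show ?thesis .
  qed
  also have "sum F {z\<in>S3 es. fst z \<noteq> []} - sum F {z\<in>S3 es. snd (snd z) \<noteq> []}
      = sum F {z\<in>S3 es. snd (snd z) = []} - sum F {z\<in>S3 es. fst z = []}"
    using sum_split_filter[OF finite_S3, of F es "\<lambda>z. fst z = []"]
          sum_split_filter[OF finite_S3, of F es "\<lambda>z. snd (snd z) = []"]
    by (simp add: algebra_simps)
  also have "sum F {z\<in>S3 es. snd (snd z) = []} = pmul t W g (i, es)"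
    unfolding pmul_S2
    by (rule sum.reindex_bij_witness[of _ "\<lambda>(a,b). (a, b, [])" "\<lambda>(a,b,c). (a, b)"])
       (auto simp: S3_def S2_def F_def mult.commute)
  also have "sum F {z\<in>S3 es. fst z = []} = pmul t g W (i, es)"
    unfolding pmul_S2
  proof (rule sum.reindex_bij_witness[of _ "\<lambda>(a,b). ([], a, b)" "\<lambda>(a,b,c). (b, c)"])
    fix z assume "z \<in> {z \<in> S3 es. fst z = []}"
    then obtain b c where z: "z = ([], b, c)" by (cases z) auto
    show "(case (case z of (a, b, c) \<Rightarrow> (b, c)) of (a, b) \<Rightarrow> g (endpt t i a, b) * W (i, a)) = F z"
      unfolding z F_def using W_loop[of i b] by (cases "W (i, b) = 0") auto
  qed (auto simp: S3_def S2_def)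
  finally show ?thesis ..
qed

definition coeff :: "('o \<times> 'b list \<Rightarrow> 'r) \<Rightarrow> 'b \<times> 'o \<times> 'b list \<times> 'b list \<times> 'b \<times> 'b list \<times> 'b list \<Rightarrow> 'r" where
  "coeff g = (\<lambda>(y,i,al,b1,e,b3,ga). g (i, al @ [e] @ ga) * mop (endpt t i al) (b1 @ [y] @ b3) e)"

definition M :: "'o \<Rightarrow> 'b list \<Rightarrow> 'b list \<Rightarrow> ('b \<times> 'o \<times> 'b list \<times> 'b list \<times> 'b \<times> 'b list \<times> 'b list) set" where
  "M i x1 x3 = {(y,i',al,b1,e,b3,ga). y \<in> Y \<and> i' = i \<and> al @ b1 = x1 \<and> b3 @ ga = x3}"

lemma M_eq: "M i x1 x3 = (\<lambda>((al,b1),(b3,ga),(e,y)). (y,i,al,b1,e,b3,ga)) ` (S2 x1 \<times> S2 x3 \<times> UNIV \<times> Y)"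
  unfolding M_def S2_def by (auto simp: image_iff)

lemma finite_M: "finite (M i x1 x3)"
  unfolding M_eq by (intro finite_imageI finite_cartesian_product finite_S2) auto

lemma M_sum: "(\<Sum>\<tau>\<in>M i x1 x3. H \<tau>)
   = (\<Sum>(al,b1)\<in>S2 x1. \<Sum>(b3,ga)\<in>S2 x3. \<Sum>e\<in>UNIV. \<Sum>y\<in>Y. H (y,i,al,b1,e,b3,ga))"
proof -
  have "(\<Sum>(al,b1)\<in>S2 x1. \<Sum>(b3,ga)\<in>S2 x3. \<Sum>e\<in>UNIV. \<Sum>y\<in>Y. H (y,i,al,b1,e,b3,ga))
      = (\<Sum>p\<in>S2 x1. \<Sum>q\<in>S2 x3. \<Sum>r\<in>UNIV \<times> Y. H (snd r,i,fst p,snd p,fst r,fst q,snd q))"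
    by (simp add: case_prod_beta sum.cartesian_product)
  also have "\<dots> = (\<Sum>z\<in>S2 x1 \<times> S2 x3 \<times> UNIV \<times> Y.
                  H (snd (snd (snd z)),i,fst (fst z),snd (fst z),fst (snd (snd z)),fst (fst (snd z)),snd (fst (snd z))))"
    by (simp add: sum.cartesian_product case_prod_beta)
  also have "\<dots> = (\<Sum>\<tau>\<in>M i x1 x3. H \<tau>)"
    by (rule sum.reindex_bij_witness[of _ "\<lambda>(y,i',al,b1,e,b3,ga). ((al,b1),(b3,ga),(e,y))"
                                         "\<lambda>((al,b1),(b3,ga),(e,y)). (y,i,al,b1,e,b3,ga)"])
       (auto simp: M_def S2_def)
  finally show ?thesis by simp
qed

lemma V_infix: "V i (a @ b @ c) \<Longrightarrow> V (endpt t i a) b"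
  by (simp add: V_append)

lemma main_rep: assumes "V i es"
  shows "pmul t W g (i, es) - pmul t g W (i, es)
     = (\<Sum>(x1,x2,x3)\<in>S3 es. \<Sum>\<tau>\<in>M i x1 x3. coeff g \<tau> * P (fst \<tau>) (endpt t i x1, x2))"
proof -
  define \<Phi> where "\<Phi> = (\<lambda>al b1 b2 b3 ga. \<Sum>e\<in>UNIV. \<Sum>y\<in>Y.
      coeff g (y,i,al,b1,e,b3,ga) * P y (endpt t i (al @ b1), b2))"
  have L: "(\<Sum>e\<in>UNIV. g (i, al @ [e] @ ga) * N (endpt t i al) be e) = (\<Sum>(b1,b2,b3)\<in>S3 be. \<Phi> al b1 b2 b3 ga)"
    if "(al,be,ga) \<in> S3 es" for al be ga
  proof -
    have "(\<Sum>e\<in>UNIV. g (i, al @ [e] @ ga) * N (endpt t i al) be e)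
        = (\<Sum>e\<in>UNIV. \<Sum>(b1,b2,b3)\<in>S3 be. \<Sum>y\<in>Y. coeff g (y,i,al,b1,e,b3,ga) * P y (endpt t i (al @ b1), b2))"
    proof (rule sum.cong[OF refl])
      fix e
      show "g (i, al @ [e] @ ga) * N (endpt t i al) be e
          = (\<Sum>(b1,b2,b3)\<in>S3 be. \<Sum>y\<in>Y. coeff g (y,i,al,b1,e,b3,ga) * P y (endpt t i (al @ b1), b2))"
        unfolding N_def sum_distrib_left
      proof (rule sum.cong[OF refl])
        fix z assume zin: "z \<in> S3 be"
        obtain b1 b2 b3 where z: "z = (b1,b2,b3)" by (cases z)
        have "al @ b1 @ b2 @ b3 @ ga = es" using that zin z by (auto simp: S3_def)
        hence "V i (al @ b1 @ b2 @ b3 @ ga)" using assms by simp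
        hence "V (endpt t i (al @ b1)) b2" using V_infix[of i "al @ b1" b2 "b3 @ ga"] by simp
        hence PP: "\<And>y. mop (endpt t (endpt t i al) b1) b2 y = P y (endpt t i (al @ b1), b2)"
          by (simp add: P_eq endpt_append)
        show "g (i, al @ [e] @ ga) * (case z of (a, b, c) \<Rightarrow> \<Sum>y\<in>Y.
             mop (endpt t (endpt t i al) a) b y * mop (endpt t i al) (a @ [y] @ c) e)
          = (case z of (b1,b2,b3) \<Rightarrow> \<Sum>y\<in>Y. coeff g (y,i,al,b1,e,b3,ga) * P y (endpt t i (al @ b1), b2))"
          unfolding z by (simp add: sum_distrib_left coeff_def PP algebra_simps)
      qed
    qed
    also have "\<dots> = (\<Sum>(b1,b2,b3)\<in>S3 be. \<Phi> al b1 b2 b3 ga)"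
      unfolding \<Phi>_def by (subst sum.swap) (simp add: case_prod_beta)
    finally show ?thesis .
  qed
  have "pmul t W g (i, es) - pmul t g W (i, es)
      = (\<Sum>(al,be,ga)\<in>S3 es. \<Sum>(b1,b2,b3)\<in>S3 be. \<Phi> al b1 b2 b3 ga)"
    unfolding comm_formula[OF assms] by (rule sum.cong[OF refl]) (auto simp: L[simplified])
  also have "\<dots> = (\<Sum>(al,b1,b2,b3,ga)\<in>S5 es. \<Phi> al b1 b2 b3 ga)" by (rule five_left)
  also have "\<dots> = (\<Sum>(x1,x2,x3)\<in>S3 es. \<Sum>(al,b1)\<in>S2 x1. \<Sum>(b3,ga)\<in>S2 x3. \<Phi> al b1 x2 b3 ga)"
    by (rule five_right[symmetric])
  also have "\<dots> = (\<Sum>(x1,x2,x3)\<in>S3 es. \<Sum>\<tau>\<in>M i x1 x3. coeff g \<tau> * P (fst \<tau>) (endpt t i x1, x2))"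
    unfolding M_sum \<Phi>_def
    by (rule sum.cong[OF refl], clarify, rule sum.cong[OF refl], clarify) (simp add: S2_def)
  finally show ?thesis .
qed

definition supp_ok :: "('o \<times> 'b list \<Rightarrow> 'r) \<Rightarrow> bool" where
  "supp_ok f \<longleftrightarrow> (\<forall>i w. f (i, w) \<noteq> 0 \<longrightarrow> V i w)"

lemma sum_nz_ex: "sum f A \<noteq> 0 \<Longrightarrow> \<exists>x\<in>A. f x \<noteq> 0"
  by (meson sum.neutral)

lemma pmul_supp: assumes "supp_ok f" "supp_ok g" shows "supp_ok (pmul t f g)"
  unfolding supp_ok_def
proof (intro allI impI)
  fix i w assume "pmul t f g (i, w) \<noteq> 0"
  then obtain a b where ab: "(a,b) \<in> S2 w" and nz: "f (endpt t i a, b) * g (i, a) \<noteq> 0"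
    unfolding pmul_S2 by (auto dest!: sum_nz_ex)
  hence "f (endpt t i a, b) \<noteq> 0" "g (i, a) \<noteq> 0" by auto
  hence "V (endpt t i a) b" "V i a" using assms unfolding supp_ok_def by blast+
  thus "V i w" using ab by (auto simp: S2_def V_append)
qed

lemma cpa_iff: "f \<in> cpa s t E val \<longleftrightarrow> supp_ok f \<and> (\<forall>c. finite {p. f p \<noteq> 0 \<and> val (f p) < c})"
  by (auto simp: cpa_def supp_ok_def V_def)

lemma W_supp: "supp_ok W"
  by (auto simp: supp_ok_def W_eq split: if_splits)

lemma P_supp: "supp_ok (P y)"
  by (auto simp: supp_ok_def P_eq split: if_splits)

lemma P_cpa: "P y \<in> cpa s t E val"
proof -
  have "{p. P y p \<noteq> 0 \<and> val (P y p) < c} \<subseteq>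
        {(i, xs). chain s t i xs \<and> length (filter (\<lambda>x. x \<notin> E) xs) \<le> 1 \<and>
                         (\<exists>z. mop i xs z \<noteq> 0 \<and> val (mop i xs z) < c)}" for c
  proof
    fix p assume "p \<in> {p. P y p \<noteq> 0 \<and> val (P y p) < c}"
    moreover obtain j w where p: "p = (j,w)" by (cases p)
    ultimately have "V j w" "mop j w y \<noteq> 0" "val (mop j w y) < c" by (auto simp: P_eq split: if_splits)
    moreover hence "filter (\<lambda>x. x \<notin> E) w = []" by (auto simp: V_def filter_empty_conv)
    ultimately show "p \<in> {(i, xs). chain s t i xs \<and> length (filter (\<lambda>x. x \<notin> E) xs) \<le> 1 \<and>
                         (\<exists>z. mop i xs z \<noteq> 0 \<and> val (mop i xs z) < c)}" using p by (auto simp: V_def)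
  qed
  thus ?thesis using ec P_supp unfolding cpa_iff energy_convergent_def by (meson finite_subset)
qed

lemma finsupp_cpa: "supp_ok f \<Longrightarrow> finite {p. f p \<noteq> 0} \<Longrightarrow> f \<in> cpa s t E val"
  unfolding cpa_iff by (auto elim: rev_finite_subset)

definition mono :: "'o \<times> 'b list \<Rightarrow> 'o \<times> 'b list \<Rightarrow> 'r" where
  "mono q = (\<lambda>p. if p = q \<and> V (fst q) (snd q) then 1 else 0)"

definition cterm :: "('o \<times> 'b list \<Rightarrow> 'r) \<Rightarrow> 'b \<times> 'o \<times> 'b list \<times> 'b list \<times> 'b \<times> 'b list \<times> 'b list
     \<Rightarrow> 'o \<times> 'b list \<Rightarrow> 'r" where
  "cterm g \<tau> = (\<lambda>p. case \<tau> of (y,i,al,b1,e,b3,ga) \<Rightarrow>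
      if p = (i, al @ b1) \<and> V i (al @ b1) then coeff g \<tau> else 0)"

definition aterm :: "'b \<times> 'o \<times> 'b list \<times> 'b list \<times> 'b \<times> 'b list \<times> 'b list \<Rightarrow> 'o \<times> 'b list \<Rightarrow> 'r" where
  "aterm \<tau> = (case \<tau> of (y,i,al,b1,e,b3,ga) \<Rightarrow> mono (t y, b3 @ ga))"

definition ival where
  "ival g \<tau> = pmul t (pmul t (aterm \<tau>) (P (fst \<tau>))) (cterm g \<tau>)"

lemma mono_supp: "supp_ok (mono q)" by (auto simp: supp_ok_def mono_def split: if_splits)
lemma aterm_supp: "supp_ok (aterm \<tau>)" by (auto simp: aterm_def mono_supp split: prod.splits)
lemma cterm_supp: "supp_ok (cterm g \<tau>)" by (auto simp: supp_ok_def cterm_def split: prod.splits if_splits)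
lemma ival_supp: "supp_ok (ival g \<tau>)"
  unfolding ival_def by (intro pmul_supp aterm_supp cterm_supp P_supp)

lemma aterm_cpa: "aterm \<tau> \<in> cpa s t E val"
proof -
  have "finite {p. mono q p \<noteq> 0}" for q
    by (rule finite_subset[of _ "{q}"]) (auto simp: mono_def split: if_splits)
  thus ?thesis by (auto simp: aterm_def intro!: finsupp_cpa mono_supp split: prod.splits)
qed

lemma cterm_cpa: "cterm g \<tau> \<in> cpa s t E val"
proof -
  obtain y i al b1 e b3 ga where tau: "\<tau> = (y,i,al,b1,e,b3,ga)" by (cases \<tau>) blast
  have "finite {p. cterm g \<tau> p \<noteq> 0}"
    by (rule finite_subset[of _ "{(i, al @ b1)}"]) (auto simp: cterm_def tau split: if_splits)
  thus ?thesis by (intro finsupp_cpa cterm_supp)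
qed

lemma ival_eval: "ival g \<tau> (i, es) = (\<Sum>(x1,x2,x3)\<in>S3 es.
     aterm \<tau> (endpt t i (x1 @ x2), x3) * P (fst \<tau>) (endpt t i x1, x2) * cterm g \<tau> (i, x1))"
proof -
  have "ival g \<tau> (i, es) = (\<Sum>(x1,r)\<in>S2 es. \<Sum>(x2,x3)\<in>S2 r.
        aterm \<tau> (endpt t i (x1 @ x2), x3) * P (fst \<tau>) (endpt t i x1, x2) * cterm g \<tau> (i, x1))"
    unfolding ival_def pmul_S2 by (simp add: sum_distrib_right case_prod_beta endpt_append)
  also have "\<dots> = (\<Sum>(x1,x2,x3)\<in>S3 es.
     aterm \<tau> (endpt t i (x1 @ x2), x3) * P (fst \<tau>) (endpt t i x1, x2) * cterm g \<tau> (i, x1))"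
    by (rule S2_S3_left)
  finally show ?thesis .
qed

lemma ival_term: assumes "V i es" "(x1,x2,x3) \<in> S3 es" "fst \<tau> \<in> Y"
  shows "aterm \<tau> (endpt t i (x1 @ x2), x3) * P (fst \<tau>) (endpt t i x1, x2) * cterm g \<tau> (i, x1)
       = (if \<tau> \<in> M i x1 x3 then coeff g \<tau> * P (fst \<tau>) (endpt t i x1, x2) else 0)"
proof -
  obtain y i' al b1 e b3 ga where tau: "\<tau> = (y,i',al,b1,e,b3,ga)" by (cases \<tau>) blast
  have es: "x1 @ x2 @ x3 = es" using assms(2) by (simp add: S3_def)
  have V1: "V i x1" and V2: "V (endpt t i x1) x2" and V3: "V (endpt t i (x1 @ x2)) x3"
    using assms(1) unfolding es[symmetric] by (auto simp: V_append endpt_append)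
  show ?thesis
  proof (cases "\<tau> \<in> M i x1 x3")
    case True
    hence m: "i' = i" "al @ b1 = x1" "b3 @ ga = x3" by (auto simp: M_def tau)
    show ?thesis
    proof (cases "P y (endpt t i x1, x2) = 0")
      case True thus ?thesis by (simp add: tau)
    next
      case False
      hence "mop (endpt t i x1) x2 y \<noteq> 0" by (simp add: P_eq split: if_splits)
      hence ty: "t y = endpt t i (x1 @ x2)" using mop_nz by (simp add: endpt_append)
      have "aterm \<tau> (endpt t i (x1 @ x2), x3) = 1"
        using V3 by (simp add: aterm_def tau mono_def m ty)
      moreover have "cterm g \<tau> (i, x1) = coeff g \<tau>"
        using V1 by (simp add: cterm_def tau m)
      ultimately show ?thesis using \<open>\<tau> \<in> M i x1 x3\<close> by simp
    qed
  next
    case False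
    hence "i' \<noteq> i \<or> al @ b1 \<noteq> x1 \<or> b3 @ ga \<noteq> x3" using assms(3) by (auto simp: M_def tau)
    hence "aterm \<tau> (endpt t i (x1 @ x2), x3) = 0 \<or> cterm g \<tau> (i, x1) = 0"
      by (auto simp: aterm_def cterm_def mono_def tau)
    thus ?thesis using False by auto
  qed
qed

lemma h'_rep: assumes "finite T" "\<forall>\<tau>\<in>T. fst \<tau> \<in> Y" "V i es"
  shows "(\<Sum>\<tau>\<in>T. ival g \<tau> (i, es))
       = (\<Sum>(x1,x2,x3)\<in>S3 es. \<Sum>\<tau>\<in>T \<inter> M i x1 x3. coeff g \<tau> * P (fst \<tau>) (endpt t i x1, x2))"
proof -
  have "(\<Sum>\<tau>\<in>T. ival g \<tau> (i, es)) = (\<Sum>(x1,x2,x3)\<in>S3 es. \<Sum>\<tau>\<in>T.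
     aterm \<tau> (endpt t i (x1 @ x2), x3) * P (fst \<tau>) (endpt t i x1, x2) * cterm g \<tau> (i, x1))"
    unfolding ival_eval by (subst sum.swap) (simp add: case_prod_beta)
  also have "\<dots> = (\<Sum>(x1,x2,x3)\<in>S3 es. \<Sum>\<tau>\<in>T.
     (if \<tau> \<in> M i x1 x3 then coeff g \<tau> * P (fst \<tau>) (endpt t i x1, x2) else 0))"
    by (rule sum.cong[OF refl], clarify, rule sum.cong[OF refl]) (use assms ival_term in auto)
  also have "\<dots> = (\<Sum>(x1,x2,x3)\<in>S3 es. \<Sum>\<tau>\<in>T \<inter> M i x1 x3. coeff g \<tau> * P (fst \<tau>) (endpt t i x1, x2))"
    by (rule sum.cong[OF refl], clarify) (simp add: sum.inter_restrict[OF assms(1)])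
  finally show ?thesis .
qed

lemma val_mult: "a * b \<noteq> 0 \<Longrightarrow> val a + val b \<le> val (a * b)"
  using ev unfolding energy_val_def by blast

lemma val_add: "a \<noteq> 0 \<Longrightarrow> b \<noteq> 0 \<Longrightarrow> a + b \<noteq> 0 \<Longrightarrow> min (val a) (val b) \<le> val (a + b)"
  using ev unfolding energy_val_def by blast

lemma nonarch_sum: assumes "finite A" "\<forall>x\<in>A. f x \<noteq> 0 \<longrightarrow> c \<le> val (f x)"
  shows "sum f A \<noteq> 0 \<longrightarrow> c \<le> val (sum f A)"
  using assms
proof (induction A rule: finite_induct)
  case empty thus ?case by simp
next
  case (insert x F)
  hence IH: "sum f F \<noteq> 0 \<longrightarrow> c \<le> val (sum f F)" by blast
  show ?case
  proof (cases "f x = 0")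
    case True thus ?thesis using IH insert by simp
  next
    case fx: False
    show ?thesis
    proof (cases "sum f F = 0")
      case True thus ?thesis using insert fx by simp
    next
      case False
      have "c \<le> val (f x)" using insert fx by blast
      thus ?thesis using val_add[OF fx False] IH False insert by auto
    qed
  qed
qed

lemma nonarch_ex: assumes "finite A" "sum f A \<noteq> 0" "val (sum f A) < c"
  shows "\<exists>x\<in>A. f x \<noteq> 0 \<and> val (f x) < c"
  using nonarch_sum[OF assms(1), of f c] assms(2,3) by force

lemma lower_bound: assumes "finite {x. Q x \<and> (h x::real) < 0}" shows "\<exists>B. \<forall>x. Q x \<longrightarrow> B \<le> h x"
proof -
  obtain B where B: "\<forall>y\<in>h ` {x. Q x \<and> h x < 0}. B \<le> y"
    using bdd_below_finite[OF finite_imageI[OF assms, of h]] unfolding bdd_below_def by blast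
  show ?thesis
  proof (intro exI allI impI)
    fix x assume "Q x"
    thus "min B 0 \<le> h x" using B by (cases "h x < 0") force+
  qed
qed

definition Fm :: "real \<Rightarrow> ('o \<times> 'b list) set" where
  "Fm c = {(i, xs). chain s t i xs \<and> length (filter (\<lambda>x. x \<notin> E) xs) \<le> 1 \<and>
                         (\<exists>z. mop i xs z \<noteq> 0 \<and> val (mop i xs z) < c)}"

lemma finite_Fm: "finite (Fm c)"
  using ec unfolding energy_convergent_def Fm_def by blast

lemma mop_bound: "\<exists>B. \<forall>j xs z. chain s t j xs \<and> length (filter (\<lambda>x. x \<notin> E) xs) \<le> 1 \<and> mop j xs z \<noteq> 0
                    \<longrightarrow> B \<le> val (mop j xs z)"
proof -
  have "{x. (case x of ((j,xs),z) \<Rightarrow> chain s t j xs \<and> length (filter (\<lambda>x. x \<notin> E) xs) \<le> 1 \<and> mop j xs z \<noteq> 0)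
        \<and> (case x of ((j,xs),z) \<Rightarrow> val (mop j xs z)) < 0} \<subseteq> Fm 0 \<times> UNIV"
    by (auto simp: Fm_def)
  hence "finite {x. (case x of ((j,xs),z) \<Rightarrow> chain s t j xs \<and> length (filter (\<lambda>x. x \<notin> E) xs) \<le> 1 \<and> mop j xs z \<noteq> 0)
        \<and> (case x of ((j,xs),z) \<Rightarrow> val (mop j xs z)) < 0}"
    using finite_Fm by (meson finite_SigmaI finite_UNIV finite_subset)
  from lower_bound[OF this] obtain B where B: "\<forall>x. (case x of ((j,xs),z) \<Rightarrow> chain s t j xs \<and>
      length (filter (\<lambda>x. x \<notin> E) xs) \<le> 1 \<and> mop j xs z \<noteq> 0) \<longrightarrow> B \<le> (case x of ((j,xs),z) \<Rightarrow> val (mop j xs z))"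
    by blast
  show ?thesis
  proof (intro exI allI impI)
    fix j xs z assume "chain s t j xs \<and> length (filter (\<lambda>x. x \<notin> E) xs) \<le> 1 \<and> mop j xs z \<noteq> 0"
    thus "B \<le> val (mop j xs z)" using B[rule_format, of "((j,xs),z)"] by simp
  qed
qed

lemma cpa_bound: assumes "g \<in> cpa s t E val" shows "\<exists>B. \<forall>p. g p \<noteq> 0 \<longrightarrow> B \<le> val (g p)"
  using assms unfolding cpa_iff by (intro lower_bound) simp

definition Tc :: "('o \<times> 'b list \<Rightarrow> 'r) \<Rightarrow> real \<Rightarrow> ('b \<times> 'o \<times> 'b list \<times> 'b list \<times> 'b \<times> 'b list \<times> 'b list) set" where
  "Tc g c = {\<tau>. case \<tau> of (y,i,al,b1,e,b3,ga) \<Rightarrow> y \<in> Y \<and> set b1 \<subseteq> E \<and> set b3 \<subseteq> E \<and>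
                  coeff g \<tau> \<noteq> 0 \<and> val (coeff g \<tau>) < c}"

lemma infx1: "a \<in> infx (a @ b @ c)"
  unfolding infx_def by (rule CollectI, rule exI[of _ "[]"], rule exI[of _ "b @ c"]) simp
lemma infx3: "c \<in> infx (a @ b @ c)"
  unfolding infx_def by (rule CollectI, rule exI[of _ "a @ b"], rule exI[of _ "[]"]) simp

lemma filter_le1: "set b1 \<subseteq> E \<Longrightarrow> set b3 \<subseteq> E \<Longrightarrow> length (filter (\<lambda>x. x \<notin> E) (b1 @ [y] @ b3)) \<le> 1"
proof -
  assume "set b1 \<subseteq> E" "set b3 \<subseteq> E"
  hence "filter (\<lambda>x. x \<notin> E) b1 = []" "filter (\<lambda>x. x \<notin> E) b3 = []" by (auto simp: filter_empty_conv)
  thus ?thesis by simp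
qed

lemma finite_Tc: assumes g: "g \<in> cpa s t E val" shows "finite (Tc g c)"
proof -
  obtain Bg where Bg: "\<forall>p. g p \<noteq> 0 \<longrightarrow> Bg \<le> val (g p)" using cpa_bound[OF g] by blast
  obtain Bm where Bm: "\<forall>j xs z. chain s t j xs \<and> length (filter (\<lambda>x. x \<notin> E) xs) \<le> 1 \<and> mop j xs z \<noteq> 0
                    \<longrightarrow> Bm \<le> val (mop j xs z)" using mop_bound by blast
  define Fg where "Fg = {p. g p \<noteq> 0 \<and> val (g p) < c - Bm}"
  have fFg: "finite Fg" using g unfolding cpa_iff Fg_def by blast
  define IS where "IS = (\<Union>L\<in>snd ` Fg. infx L)"
  define JS where "JS = (\<Union>L\<in>snd ` Fm (c - Bg). infx L)"
  have fin: "finite IS" "finite JS" unfolding IS_def JS_def using fFg finite_Fm finite_infx by auto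
  have "Tc g c \<subseteq> (UNIV::'b set) \<times> (UNIV::'o set) \<times> IS \<times> JS \<times> (UNIV::'b set) \<times> JS \<times> IS"
  proof
    fix \<tau> assume tc: "\<tau> \<in> Tc g c"
    obtain y i al b1 e b3 ga where tau: "\<tau> = (y,i,al,b1,e,b3,ga)" by (cases \<tau>) blast
    let ?gv = "g (i, al @ [e] @ ga)" and ?mv = "mop (endpt t i al) (b1 @ [y] @ b3) e"
    have hh: "y \<in> Y \<and> set b1 \<subseteq> E \<and> set b3 \<subseteq> E \<and> coeff g \<tau> \<noteq> 0 \<and> val (coeff g \<tau>) < c"
      using tc unfolding Tc_def tau mem_Collect_eq prod.case by assumption
    have ce: "coeff g \<tau> = ?gv * ?mv" by (simp add: coeff_def tau)
    have h1: "set b1 \<subseteq> E" "set b3 \<subseteq> E" using hh by blast+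
    have h3: "?gv * ?mv \<noteq> 0" and h4: "val (?gv * ?mv) < c" using hh unfolding ce by blast+
    have nz: "?gv \<noteq> 0" "?mv \<noteq> 0" using h3 by auto
    have ch: "chain s t (endpt t i al) (b1 @ [y] @ b3)" using mop_nz[OF nz(2)] by blast
    have fl: "length (filter (\<lambda>x. x \<notin> E) (b1 @ [y] @ b3)) \<le> 1" by (rule filter_le1[OF h1])
    have "Bg \<le> val ?gv" using Bg nz(1) by blast
    moreover have "Bm \<le> val ?mv" using Bm[rule_format, OF conjI[OF ch conjI[OF fl nz(2)]]] .
    moreover have "val ?gv + val ?mv \<le> val (?gv * ?mv)" by (rule val_mult[OF h3])
    ultimately have v: "val ?gv < c - Bm" "val ?mv < c - Bg" using h4 by linarith+
    have fg: "(i, al @ [e] @ ga) \<in> Fg" using v(1) nz(1) unfolding Fg_def by simp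
    have m1: "al \<in> IS" unfolding IS_def by (rule UN_I[OF imageI[OF fg]]) (simp only: snd_conv infx1)
    have m2: "ga \<in> IS" unfolding IS_def
      by (rule UN_I[OF imageI[OF fg]]) (simp only: snd_conv infx3)
    have fm: "(endpt t i al, b1 @ [y] @ b3) \<in> Fm (c - Bg)"
      unfolding Fm_def using ch fl nz(2) v(2) by auto
    have m3: "b1 \<in> JS" unfolding JS_def by (rule UN_I[OF imageI[OF fm]]) (simp only: snd_conv infx1)
    have m4: "b3 \<in> JS" unfolding JS_def by (rule UN_I[OF imageI[OF fm]]) (simp only: snd_conv infx3)
    show "\<tau> \<in> (UNIV::'b set) \<times> (UNIV::'o set) \<times> IS \<times> JS \<times> (UNIV::'b set) \<times> JS \<times> IS"
      unfolding tau using m1 m2 m3 m4 by blast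
  qed
  moreover have "finite ((UNIV::'b set) \<times> (UNIV::'o set) \<times> IS \<times> JS \<times> (UNIV::'b set) \<times> JS \<times> IS)"
    using fin by (intro finite_cartesian_product) simp_all
  ultimately show ?thesis by (rule finite_subset)
qed

lemma coeff_lb:
  assumes Bg: "\<forall>p. g p \<noteq> 0 \<longrightarrow> Bg \<le> val (g p)"
    and Bm: "\<forall>j xs z. chain s t j xs \<and> length (filter (\<lambda>x. x \<notin> E) xs) \<le> 1 \<and> mop j xs z \<noteq> 0
                    \<longrightarrow> Bm \<le> val (mop j xs z)"
    and tau: "\<tau> = (y,i,al,b1,e,b3,ga)" and h1: "set b1 \<subseteq> E" "set b3 \<subseteq> E" and nz0: "coeff g \<tau> \<noteq> 0"
  shows "Bg + Bm \<le> val (coeff g \<tau>)"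
proof -
  let ?gv = "g (i, al @ [e] @ ga)" and ?mv = "mop (endpt t i al) (b1 @ [y] @ b3) e"
  have ce: "coeff g \<tau> = ?gv * ?mv" by (simp add: coeff_def tau)
  have h3: "?gv * ?mv \<noteq> 0" using nz0 ce by simp
  have nz: "?gv \<noteq> 0" "?mv \<noteq> 0" using h3 by auto
  have ch: "chain s t (endpt t i al) (b1 @ [y] @ b3)" using mop_nz[OF nz(2)] by blast
  have fl: "length (filter (\<lambda>x. x \<notin> E) (b1 @ [y] @ b3)) \<le> 1" by (rule filter_le1[OF h1])
  have "Bg \<le> val ?gv" using Bg nz(1) by blast
  moreover have "Bm \<le> val ?mv" using Bm[rule_format, OF conjI[OF ch conjI[OF fl nz(2)]]] .
  moreover have "val ?gv + val ?mv \<le> val (?gv * ?mv)" by (rule val_mult[OF h3])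
  ultimately show ?thesis unfolding ce by linarith
qed

lemma P_lb:
  assumes Bm: "\<forall>j xs z. chain s t j xs \<and> length (filter (\<lambda>x. x \<notin> E) xs) \<le> 1 \<and> mop j xs z \<noteq> 0
                    \<longrightarrow> Bm \<le> val (mop j xs z)"
    and nz: "P y (j, w) \<noteq> 0"
  shows "Bm \<le> val (P y (j, w))" "(j, w) \<in> Fm c \<or> c \<le> val (P y (j, w))"
proof -
  have V: "V j w" and m: "mop j w y \<noteq> 0" "P y (j, w) = mop j w y" using nz by (auto simp: P_eq split: if_splits)
  have fl: "filter (\<lambda>x. x \<notin> E) w = []" using V by (auto simp: V_def filter_empty_conv)
  have ch: "chain s t j w" using V by (simp add: V_def)
  show "Bm \<le> val (P y (j, w))" unfolding m(2) using Bm ch fl m(1) by simp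
  show "(j, w) \<in> Fm c \<or> c \<le> val (P y (j, w))" unfolding m(2) Fm_def using ch fl m(1) by auto
qed

lemma final: assumes g: "g \<in> cpa s t E val"
  shows "(\<lambda>p. pmul t W g p - pmul t g W p) \<in> Rideal s t deg unit E val mop"
proof -
  define h where "h = (\<lambda>p. pmul t W g p - pmul t g W p)"
  have gs: "supp_ok g" using g by (simp add: cpa_iff)
  obtain Bg where Bg: "\<forall>p. g p \<noteq> 0 \<longrightarrow> Bg \<le> val (g p)" using cpa_bound[OF g] by blast
  obtain Bm where Bm: "\<forall>j xs z. chain s t j xs \<and> length (filter (\<lambda>x. x \<notin> E) xs) \<le> 1 \<and> mop j xs z \<noteq> 0
                    \<longrightarrow> Bm \<le> val (mop j xs z)" using mop_bound by blast
  have hz: "h (i, es) = 0" if "\<not> V i es" for i es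
  proof -
    have "pmul t W g (i, es) = 0" "pmul t g W (i, es) = 0"
      using pmul_supp[OF W_supp gs] pmul_supp[OF gs W_supp] that unfolding supp_ok_def by blast+
    thus ?thesis by (simp add: h_def)
  qed
  have hrep: "h (i, es) = (\<Sum>(x1,x2,x3)\<in>S3 es. \<Sum>\<tau>\<in>M i x1 x3. coeff g \<tau> * P (fst \<tau>) (endpt t i x1, x2))"
    if "V i es" for i es using main_rep[OF that] by (simp add: h_def)
  have tf: "fst \<tau> \<in> Y \<and> coeff g \<tau> \<noteq> 0 \<and> P (fst \<tau>) (endpt t i x1, x2) \<noteq> 0 \<and>
            Bm \<le> val (P (fst \<tau>) (endpt t i x1, x2)) \<and>
            (\<forall>c. \<tau> \<in> Tc g c \<or> c \<le> val (coeff g \<tau>)) \<and>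
            val (coeff g \<tau>) + val (P (fst \<tau>) (endpt t i x1, x2)) \<le> val (coeff g \<tau> * P (fst \<tau>) (endpt t i x1, x2))"
    if V: "V i es" and x: "(x1,x2,x3) \<in> S3 es" and tm: "\<tau> \<in> M i x1 x3"
      and nz: "coeff g \<tau> * P (fst \<tau>) (endpt t i x1, x2) \<noteq> 0" for i es x1 x2 x3 \<tau>
  proof -
    obtain y al b1 e b3 ga where tau: "\<tau> = (y,i,al,b1,e,b3,ga)" and y: "y \<in> Y"
      and x1: "al @ b1 = x1" and x3: "b3 @ ga = x3" using tm by (auto simp: M_def)
    have "set es \<subseteq> E" using V by (simp add: V_def)
    hence h1: "set b1 \<subseteq> E" "set b3 \<subseteq> E" using x x1 x3 by (auto simp: S3_def)
    have nz2: "coeff g \<tau> \<noteq> 0" "P (fst \<tau>) (endpt t i x1, x2) \<noteq> 0" using nz by auto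
    have all: "\<forall>c. \<tau> \<in> Tc g c \<or> c \<le> val (coeff g \<tau>)"
    proof
      fix c'
      show "\<tau> \<in> Tc g c' \<or> c' \<le> val (coeff g \<tau>)"
      proof (cases "val (coeff g \<tau>) < c'")
        case True
        have "\<tau> \<in> Tc g c'" unfolding Tc_def mem_Collect_eq
          using y h1 nz2(1) True by (simp add: tau)
        thus ?thesis ..
      qed simp
    qed
    show ?thesis using y nz2 P_lb(1)[OF Bm nz2(2)] val_mult[OF nz] all by (simp add: tau)
  qed
  have hcpa: "h \<in> cpa s t E val"
    unfolding cpa_iff
  proof (intro conjI allI)
    show "supp_ok h" using hz unfolding supp_ok_def by blast
  next
    fix c
    let ?S = "(\<lambda>(\<tau>, q). case \<tau> of (y,i,al,b1,e,b3,ga) \<Rightarrow> (i, al @ b1 @ snd q @ b3 @ ga))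
               ` (Tc g (c - Bm) \<times> Fm (c - Bg - Bm))"
    have "{p. h p \<noteq> 0 \<and> val (h p) < c} \<subseteq> ?S"
    proof
      fix p assume "p \<in> {p. h p \<noteq> 0 \<and> val (h p) < c}"
      moreover obtain i es where p: "p = (i, es)" by (cases p)
      ultimately have hnz: "h (i, es) \<noteq> 0" and hv: "val (h (i, es)) < c" by auto
      have V: "V i es" using hz hnz by blast
      obtain z where z: "z \<in> S3 es" and znz: "(case z of (x1,x2,x3) \<Rightarrow>
          \<Sum>\<tau>\<in>M i x1 x3. coeff g \<tau> * P (fst \<tau>) (endpt t i x1, x2)) \<noteq> 0"
        and zv: "val (case z of (x1,x2,x3) \<Rightarrow>
          \<Sum>\<tau>\<in>M i x1 x3. coeff g \<tau> * P (fst \<tau>) (endpt t i x1, x2)) < c"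
        using nonarch_ex[OF finite_S3 hnz[unfolded hrep[OF V]] hv[unfolded hrep[OF V]]] by blast
      obtain x1 x2 x3 where zz: "z = (x1,x2,x3)" by (cases z) blast
      obtain \<tau> where tm: "\<tau> \<in> M i x1 x3" and tnz: "coeff g \<tau> * P (fst \<tau>) (endpt t i x1, x2) \<noteq> 0"
        and tv: "val (coeff g \<tau> * P (fst \<tau>) (endpt t i x1, x2)) < c"
        using nonarch_ex[OF finite_M znz[unfolded zz prod.case] zv[unfolded zz prod.case]] by blast
      have x: "(x1,x2,x3) \<in> S3 es" using z zz by simp
      note T = tf[OF V x tm tnz]
      obtain y al b1 e b3 ga where tau: "\<tau> = (y,i,al,b1,e,b3,ga)"
        and x1: "al @ b1 = x1" and x3: "b3 @ ga = x3" using tm by (auto simp: M_def)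
      have "set es \<subseteq> E" using V by (simp add: V_def)
      hence h1: "set b1 \<subseteq> E" "set b3 \<subseteq> E" using x x1 x3 by (auto simp: S3_def)
      have cl: "Bg + Bm \<le> val (coeff g \<tau>)" using coeff_lb[OF Bg Bm tau h1] T by blast
      have T1: "Bm \<le> val (P (fst \<tau>) (endpt t i x1, x2))" and T2: "\<forall>c. \<tau> \<in> Tc g c \<or> c \<le> val (coeff g \<tau>)"
        and T3: "val (coeff g \<tau>) + val (P (fst \<tau>) (endpt t i x1, x2)) \<le> val (coeff g \<tau> * P (fst \<tau>) (endpt t i x1, x2))"
        and T4: "P (fst \<tau>) (endpt t i x1, x2) \<noteq> 0"
        using T by blast+
      have "val (coeff g \<tau>) < c - Bm" using T1 T3 tv by linarith
      hence inT: "\<tau> \<in> Tc g (c - Bm)" using T2 by force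
      have "(endpt t i x1, x2) \<in> Fm (c - Bg - Bm) \<or> c - Bg - Bm \<le> val (P (fst \<tau>) (endpt t i x1, x2))"
        using P_lb(2)[OF Bm T4] by blast
      moreover have "val (P (fst \<tau>) (endpt t i x1, x2)) < c - Bg - Bm" using cl T3 tv by linarith
      ultimately have inF: "(endpt t i x1, x2) \<in> Fm (c - Bg - Bm)" by linarith
      have "es = al @ b1 @ x2 @ b3 @ ga" using x x1 x3 by (auto simp: S3_def)
      thus "p \<in> ?S" using inT inF unfolding p tau
        by (intro image_eqI[of _ _ "(\<tau>, (endpt t i x1, x2))"]) (simp_all add: tau)
    qed
    moreover have "finite ?S" using finite_Tc[OF g] finite_Fm by simp
    ultimately show "finite {p. h p \<noteq> 0 \<and> val (h p) < c}" by (rule finite_subset)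
  qed
  have hcl: "h \<in> eclosure val (alg_ideal t (cpa s t E val)
        {m0b s t E mop f | f. \<not> deg f \<and> f \<notin> range unit})"
    unfolding eclosure_def
  proof (intro CollectI allI)
    fix c
    define T where "T = Tc g (c - Bm)"
    have fT: "finite T" unfolding T_def by (rule finite_Tc[OF g])
    have TY: "\<forall>\<tau>\<in>T. fst \<tau> \<in> Y" by (auto simp: T_def Tc_def)
    define h' where "h' = (\<lambda>p. \<Sum>\<tau>\<in>T. ival g \<tau> p)"
    have "h' \<in> alg_ideal t (cpa s t E val) {m0b s t E mop f | f. \<not> deg f \<and> f \<notin> range unit}"
    proof -
      obtain en where en: "bij_betw en {0..<card T} T" using ex_bij_betw_nat_finite[OF fT] by blast
      have "h' = (\<lambda>p. \<Sum>l<card T. pmul t (pmul t (aterm (en l)) (P (fst (en l)))) (cterm g (en l)) p)"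
        unfolding h'_def ival_def lessThan_atLeast0
        by (rule ext, rule sum.reindex_bij_betw[OF en, symmetric])
      moreover have "\<forall>l<card T. aterm (en l) \<in> cpa s t E val \<and>
               P (fst (en l)) \<in> {m0b s t E mop f | f. \<not> deg f \<and> f \<notin> range unit} \<and>
               cterm g (en l) \<in> cpa s t E val"
      proof (intro allI impI conjI aterm_cpa cterm_cpa)
        fix l assume "l < card T"
        hence "en l \<in> T" using en by (auto simp: bij_betw_def)
        hence "fst (en l) \<in> Y" using TY by blast
        thus "P (fst (en l)) \<in> {m0b s t E mop f | f. \<not> deg f \<and> f \<notin> range unit}" by (auto simp: Y_def)
      qed
      ultimately show ?thesis unfolding alg_ideal_def
        by (intro CollectI exI[of _ "card T"] exI[of _ "\<lambda>l. aterm (en l)"] exI[of _ "\<lambda>l. P (fst (en l))"]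
              exI[of _ "\<lambda>l. cterm g (en l)"] conjI) simp_all
    qed
    moreover have "\<forall>p. h p \<noteq> h' p \<longrightarrow> c \<le> val (h p - h' p)"
    proof (intro allI impI)
      fix p assume ne: "h p \<noteq> h' p"
      obtain i es where p: "p = (i, es)" by (cases p)
      have V: "V i es"
      proof (rule ccontr)
        assume nV: "\<not> V i es"
        have "h' (i, es) = 0" unfolding h'_def
          using ival_supp nV unfolding supp_ok_def by (intro sum.neutral) blast
        thus False using ne hz[OF nV] p by simp
      qed
      define tm where "tm = (\<lambda>x1 x2 \<tau>. coeff g \<tau> * P (fst \<tau>) (endpt t i x1, x2))"
      have "h p - h' p = (\<Sum>(x1,x2,x3)\<in>S3 es. (\<Sum>\<tau>\<in>M i x1 x3. tm x1 x2 \<tau>) - (\<Sum>\<tau>\<in>T \<inter> M i x1 x3. tm x1 x2 \<tau>))"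
        unfolding p hrep[OF V] h'_def h'_rep[OF fT TY V] tm_def
        by (simp add: sum_subtractf[symmetric] case_prod_beta)
      also have "\<dots> = (\<Sum>(x1,x2,x3)\<in>S3 es. \<Sum>\<tau>\<in>M i x1 x3 - T. tm x1 x2 \<tau>)"
      proof (rule sum.cong[OF refl], clarify)
        fix x1 x2 x3
        have "(\<Sum>\<tau>\<in>M i x1 x3. tm x1 x2 \<tau>) = (\<Sum>\<tau>\<in>M i x1 x3 - T \<inter> M i x1 x3. tm x1 x2 \<tau>) + (\<Sum>\<tau>\<in>T \<inter> M i x1 x3. tm x1 x2 \<tau>)"
          by (rule sum.subset_diff) (auto simp: finite_M)
        moreover have "M i x1 x3 - T \<inter> M i x1 x3 = M i x1 x3 - T" by blast
        ultimately show "(\<Sum>\<tau>\<in>M i x1 x3. tm x1 x2 \<tau>) - (\<Sum>\<tau>\<in>T \<inter> M i x1 x3. tm x1 x2 \<tau>)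
            = (\<Sum>\<tau>\<in>M i x1 x3 - T. tm x1 x2 \<tau>)" by simp
      qed
      finally have eq: "h p - h' p = (\<Sum>(x1,x2,x3)\<in>S3 es. \<Sum>\<tau>\<in>M i x1 x3 - T. tm x1 x2 \<tau>)" .
      have inner: "(\<Sum>\<tau>\<in>M i x1 x3 - T. tm x1 x2 \<tau>) \<noteq> 0 \<longrightarrow> c \<le> val (\<Sum>\<tau>\<in>M i x1 x3 - T. tm x1 x2 \<tau>)"
        if x: "(x1,x2,x3) \<in> S3 es" for x1 x2 x3
      proof (rule nonarch_sum)
        show "finite (M i x1 x3 - T)" by (simp add: finite_M)
        show "\<forall>\<tau>\<in>M i x1 x3 - T. tm x1 x2 \<tau> \<noteq> 0 \<longrightarrow> c \<le> val (tm x1 x2 \<tau>)"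
        proof (intro ballI impI)
          fix \<tau> assume tmT: "\<tau> \<in> M i x1 x3 - T" and nz: "tm x1 x2 \<tau> \<noteq> 0"
          note T' = tf[OF V x _ nz[unfolded tm_def]]
          have tmM: "\<tau> \<in> M i x1 x3" and nT: "\<tau> \<notin> Tc g (c - Bm)" using tmT unfolding T_def by blast+
          have T1: "Bm \<le> val (P (fst \<tau>) (endpt t i x1, x2))" and T2: "\<forall>c. \<tau> \<in> Tc g c \<or> c \<le> val (coeff g \<tau>)"
            and T3: "val (coeff g \<tau>) + val (P (fst \<tau>) (endpt t i x1, x2)) \<le> val (tm x1 x2 \<tau>)"
            using T'[OF tmM] unfolding tm_def by blast+
          have "c - Bm \<le> val (coeff g \<tau>)" using T2 nT by blast
          thus "c \<le> val (tm x1 x2 \<tau>)" using T1 T3 by linarith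
        qed
      qed
      have "h p - h' p \<noteq> 0" using ne by simp
      have all: "\<forall>z\<in>S3 es. (case z of (x1,x2,x3) \<Rightarrow> \<Sum>\<tau>\<in>M i x1 x3 - T. tm x1 x2 \<tau>) \<noteq> 0 \<longrightarrow>
                   c \<le> val (case z of (x1,x2,x3) \<Rightarrow> \<Sum>\<tau>\<in>M i x1 x3 - T. tm x1 x2 \<tau>)"
      proof
        fix z assume "z \<in> S3 es"
        moreover obtain x1 x2 x3 where "z = (x1,x2,x3)" by (cases z) blast
        ultimately show "(case z of (x1,x2,x3) \<Rightarrow> \<Sum>\<tau>\<in>M i x1 x3 - T. tm x1 x2 \<tau>) \<noteq> 0 \<longrightarrow>
                   c \<le> val (case z of (x1,x2,x3) \<Rightarrow> \<Sum>\<tau>\<in>M i x1 x3 - T. tm x1 x2 \<tau>)"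
          using inner by simp
      qed
      thus "c \<le> val (h p - h' p)" unfolding eq using nonarch_sum[OF finite_S3 all] \<open>h p - h' p \<noteq> 0\<close>
        unfolding eq by blast
    qed
    ultimately show "\<exists>g'\<in>alg_ideal t (cpa s t E val) {m0b s t E mop f | f. \<not> deg f \<and> f \<notin> range unit}.
                   \<forall>p. h p \<noteq> g' p \<longrightarrow> c \<le> val (h p - g' p)" by blast
  qed
  show ?thesis using hcpa hcl unfolding Rideal_def h_def by blast
qed

end

theorem theorem6p6:
  fixes src tgt :: "'b::finite \<Rightarrow> 'o::finite"
    and deg_odd :: "'b \<Rightarrow> bool"
    and unit :: "'o \<Rightarrow> 'b"
    and mop :: "'o \<Rightarrow> 'b list \<Rightarrow> 'b \<Rightarrow> 'r::comm_ring_1"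
    and val :: "'r \<Rightarrow> real"
    and E :: "'b set"
  assumes "energy_val val"
    and "unital_Ainf src tgt deg_odd unit mop"
    and "energy_convergent src tgt E val mop"
    and "\<forall>e\<in>E. deg_odd e"
  shows "\<forall>g\<in>cpa src tgt E val.
           (\<lambda>p. pmul tgt (Wpot src tgt E unit mop) g p - pmul tgt g (Wpot src tgt E unit mop) p)
             \<in> Rideal src tgt deg_odd unit E val mop"
proof -
  interpret thm66 src tgt deg_odd unit mop val E using assms by unfold_locales
  show ?thesis using final by blast
qed

end
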